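(* Let $\mathcal{S}\subset\mathbb{T}$ be a measurable set of positive Lebesgue measure. Then there exists a set $\Lambda\subset\mathbb{Z}$ such that: (i') for every $\alpha>1$ there is a constant $C(\alpha)>0$ such that for every $N\in\mathbb{N}$, $\Lambda$ contains an arithmetic progression $\{M+\ell,M+2\ell,\ldots,M+N\ell\}$ of length $N$ (with some $M\in\mathbb{Z}$) whose step $\ell\in\mathbb{N}$ satisfies $\ell< C(\alpha)N^{\alpha}$; and (ii) $E(\Lambda)=\{e^{i\lambda t}\}_{\lambda\in\Lambda}$ is a Riesz sequence in $L^2(\mathcal{S})$.
   Context: $\mathbb{T}=\mathbb{R}/2\pi\mathbb{Z}$, identified with $[-\pi,\pi)$. For $\Lambda\subset\mathbb{Z}$, $E(\Lambda):=\{e^{i\lambda t}\}_{\lambda\in\Lambda}$. A sequence $\{\varphi_i\}_{i\in I}$ in a Hilbert space is a Riesz sequence if there are constants $A,B>0$ such that $A\sum_{i}|c_i|^2\le \|\sum_i c_i\varphi_i\|^2\le B\sum_i|c_i|^2$ for every finite sequence of scalars $\{c_i\}$. The space $L^2(\mathcal{S})$ is taken with the norm $\|f\|^2=\int_{\mathcal{S}}|f(t)|^2\,\frac{dt}{2\pi}$. *)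

theory Defs
  imports "HOL-Analysis.Analysis"
begin

text \<open>The torus T = R/2piZ is identified with [-pi,pi); L^2(S) carries the
  normalised norm  ||f||^2 = integral over S of |f t|^2 dt/(2 pi).\<close>

definition L2S_norm2 :: "real set \<Rightarrow> (real \<Rightarrow> complex) \<Rightarrow> real" where
  "L2S_norm2 S f = (LINT t:S|lebesgue. (cmod (f t))\<^sup>2) / (2 * pi)"

definition riesz_sequence_L2 :: "real set \<Rightarrow> 'i set \<Rightarrow> ('i \<Rightarrow> real \<Rightarrow> complex) \<Rightarrow> bool" where
  "riesz_sequence_L2 S I \<phi> \<longleftrightarrow>
     (\<exists>A B. A > 0 \<and> B > 0 \<and>
        (\<forall>F c. finite F \<longrightarrow> F \<subseteq> I \<longrightarrow>
           A * (\<Sum>i\<in>F. (cmod (c i))\<^sup>2) \<le> L2S_norm2 S (\<lambda>t. \<Sum>i\<in>F. c i * \<phi> i t) \<and>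
           L2S_norm2 S (\<lambda>t. \<Sum>i\<in>F. c i * \<phi> i t) \<le> B * (\<Sum>i\<in>F. (cmod (c i))\<^sup>2)))"

definition exps :: "int \<Rightarrow> real \<Rightarrow> complex" where
  "exps m t = exp (\<i> * of_int m * of_real t)"

end

theory Submission
  imports Defs
begin

lemma exps_alt: "exps n t = exp (\<i> * complex_of_real (of_int n * t))"
  unfolding exps_def by (simp add: mult.assoc)

lemma norm_exps[simp]: "cmod (exps n t) = 1"
  unfolding exps_alt by (simp del: norm_exp_i_times add: norm_exp_i_times)

lemma cnj_exps: "cnj (exps n t) = exps (-n) t"
  unfolding exps_def by (simp add: exp_cnj)

lemma exps_mult_cnj: "exps i t * cnj (exps j t) = exps (i - j) t"
  unfolding cnj_exps unfolding exps_def by (simp add: exp_add[symmetric] algebra_simps)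

lemma id_meas_leb[measurable]: "(\<lambda>x::real. x) \<in> borel_measurable lebesgue"
  using id_borel_measurable_lebesgue unfolding id_def .

lemma exps_measurable[measurable]: "exps n \<in> borel_measurable lebesgue"
  unfolding exps_def by measurable

lemma set_integrable_const1:
  assumes "A \<in> sets lebesgue" "emeasure lebesgue A < \<infinity>"
  shows "set_integrable lebesgue A (\<lambda>_. c::complex)"
  unfolding set_integrable_def
  using assms by (metis has_bochner_integral_indicator integrable.intros infinity_ennreal_def)

lemma set_integrable_exps:
  assumes "A \<in> sets lebesgue" "emeasure lebesgue A < \<infinity>"
  shows "set_integrable lebesgue A (exps n)"
proof (rule set_integrable_bound[OF set_integrable_const1[OF assms, of 1]])
  show "set_borel_measurable lebesgue A (exps n)"
    unfolding set_borel_measurable_def using assms by measurable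
qed auto

lemma set_integral_sum':
  fixes f :: "'i \<Rightarrow> 'a \<Rightarrow> 'b::{banach, second_countable_topology}"
  assumes "\<And>i. i \<in> I \<Longrightarrow> set_integrable M A (f i)"
  shows "(LINT x:A|M. (\<Sum>i\<in>I. f i x)) = (\<Sum>i\<in>I. LINT x:A|M. f i x)"
  using assms unfolding set_lebesgue_integral_def set_integrable_def
  by (simp add: scaleR_sum_right integral_sum)

lemma set_integrable_sum':
  fixes f :: "'i \<Rightarrow> 'a \<Rightarrow> 'b::{banach, second_countable_topology}"
  assumes "\<And>i. i \<in> I \<Longrightarrow> set_integrable M A (f i)"
  shows "set_integrable M A (\<lambda>x. \<Sum>i\<in>I. f i x)"
  using assms unfolding set_integrable_def
  by (simp add: scaleR_sum_right)

definition gA :: "real set \<Rightarrow> int \<Rightarrow> complex" where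
  "gA A n = (LINT t:A|lebesgue. exps n t)"

lemma gram:
  assumes "A \<in> sets lebesgue" "emeasure lebesgue A < \<infinity>" "finite F"
  shows "complex_of_real (LINT t:A|lebesgue. (cmod (\<Sum>i\<in>F. c i * exps i t))\<^sup>2)
       = (\<Sum>i\<in>F. \<Sum>j\<in>F. c i * cnj (c j) * gA A (i - j))"
proof -
  have pw: "complex_of_real ((cmod (\<Sum>i\<in>F. c i * exps i t))\<^sup>2)
        = (\<Sum>i\<in>F. \<Sum>j\<in>F. c i * cnj (c j) * exps (i - j) t)" for t
  proof -
    have "complex_of_real ((cmod (\<Sum>i\<in>F. c i * exps i t))\<^sup>2)
        = (\<Sum>i\<in>F. c i * exps i t) * cnj (\<Sum>j\<in>F. c j * exps j t)"
      by (rule complex_norm_square)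
    also have "\<dots> = (\<Sum>i\<in>F. \<Sum>j\<in>F. c i * cnj (c j) * (exps i t * cnj (exps j t)))"
      by (simp add: sum_distrib_left sum_distrib_right algebra_simps) (rule sum.swap)
    finally show ?thesis by (simp add: exps_mult_cnj)
  qed
  have "complex_of_real (LINT t:A|lebesgue. (cmod (\<Sum>i\<in>F. c i * exps i t))\<^sup>2)
      = (LINT t:A|lebesgue. complex_of_real ((cmod (\<Sum>i\<in>F. c i * exps i t))\<^sup>2))"
    by (rule set_integral_complex_of_real[symmetric])
  also have "\<dots> = (LINT t:A|lebesgue. (\<Sum>i\<in>F. \<Sum>j\<in>F. c i * cnj (c j) * exps (i - j) t))"
    by (simp only: pw)
  also have "\<dots> = (\<Sum>i\<in>F. \<Sum>j\<in>F. LINT t:A|lebesgue. c i * cnj (c j) * exps (i - j) t)"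
  proof -
    have I: "set_integrable lebesgue A (\<lambda>t. c i * cnj (c j) * exps (i - j) t)" for i j
      using set_integrable_exps[OF assms(1,2)] by simp
    have I2: "set_integrable lebesgue A (\<lambda>t. \<Sum>j\<in>F. c i * cnj (c j) * exps (i - j) t)" for i
      by (rule set_integrable_sum'[OF I])
    show ?thesis
      by (simp add: set_integral_sum'[OF I2] set_integral_sum'[OF I])
  qed
  also have "\<dots> = (\<Sum>i\<in>F. \<Sum>j\<in>F. c i * cnj (c j) * gA A (i - j))"
    unfolding gA_def by simp
  finally show ?thesis .
qed


lemma Tper_sets[simp]: "{-pi..pi} \<in> sets lebesgue" by simp
lemma Tper_fin: "emeasure lebesgue {-pi..pi} < \<infinity>" by simp
lemma Tper_meas: "measure lebesgue {-pi..pi} = 2*pi" by simp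

lemma exps_pi: "exps n pi = exps n (-pi)"
proof -
  have "exps n (-pi) * exp ((2 * of_int n * pi) * \<i>) = exp (\<i> * of_int n * of_real (-pi) + (2 * of_int n * pi) * \<i>)"
    unfolding exps_def by (simp only: exp_add)
  also have "\<i> * of_int n * of_real (-pi) + (2 * of_int n * pi) * \<i> = \<i> * of_int n * of_real pi"
    by (simp add: algebra_simps)
  finally have "exps n pi = exps n (-pi) * exp ((2 * of_int n * pi) * \<i>)"
    unfolding exps_def by simp
  also have "exp ((2 * of_int n * pi) * \<i>) = 1"
    using exp_integer_2pi[of "of_int n"] by simp
  finally show ?thesis by simp
qed

lemma gA_full: "gA {-pi..pi} n = (if n = 0 then 2*pi else 0)"
proof (cases "n = 0")
  case True
  then show ?thesis unfolding gA_def exps_def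
    using set_integral_const[OF Tper_sets, of "1::complex"] Tper_fin by (simp add: scaleR_conv_of_real)
next
  case False
  have d: "((\<lambda>t. exp (\<i> * of_int n * t) / (\<i> * of_int n)) has_vector_derivative exp (\<i> * of_int n * t))
      (at t within {-pi..pi})" for t
    using False
    by (intro derivative_eq_intros has_complex_derivative_imp_has_vector_derivative [unfolded o_def] | simp)+
  have "((\<lambda>t. exps n t) has_integral (exps n pi / (\<i> * of_int n) - exps n (-pi) / (\<i> * of_int n))) {-pi..pi}"
    unfolding exps_def
    by (rule fundamental_theorem_of_calculus) (use d in auto)
  hence "((\<lambda>t. exps n t) has_integral 0) {-pi..pi}" by (simp add: exps_pi)
  moreover have "(LINT t:{-pi..pi}|lebesgue. exps n t) = integral {-pi..pi} (exps n)"
    by (rule set_lebesgue_integral_eq_integral(2)[OF set_integrable_exps[OF Tper_sets Tper_fin]])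
  ultimately show ?thesis using False unfolding gA_def by (simp add: integral_unique)
qed


lemma cnorm_sq: "(complex_of_real (cmod z))\<^sup>2 = z * cnj z"
  by (simp only: of_real_power[symmetric] complex_norm_square)

lemma set_integral_Re:
  assumes "set_integrable M A (f :: 'a \<Rightarrow> complex)"
  shows "(LINT x:A|M. Re (f x)) = Re (LINT x:A|M. f x)"
proof -
  have "(LINT x:A|M. Re (f x)) = integral\<^sup>L M (\<lambda>x. Re (indicator A x *\<^sub>R f x))"
    unfolding set_lebesgue_integral_def by simp
  also have "\<dots> = Re (integral\<^sup>L M (\<lambda>x. indicator A x *\<^sub>R f x))"
    by (rule integral_bounded_linear[OF bounded_linear_Re]) (use assms in \<open>simp add: set_integrable_def\<close>)
  finally show ?thesis unfolding set_lebesgue_integral_def .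
qed

lemma set_integrable_bounded_real:
  assumes "A \<in> sets lebesgue" "emeasure lebesgue A < \<infinity>"
    and "f \<in> borel_measurable lebesgue" "\<And>x. \<bar>f x\<bar> \<le> B"
  shows "set_integrable lebesgue A (f :: real \<Rightarrow> real)"
proof -
  have c: "set_integrable lebesgue A (\<lambda>_. B)"
    unfolding set_integrable_def
    using assms(1,2) by (metis has_bochner_integral_indicator integrable.intros infinity_ennreal_def)
  show ?thesis
    by (rule set_integrable_bound[OF c]) (use assms in \<open>auto simp: set_borel_measurable_def intro!: order_trans[OF _ abs_ge_self]\<close>)
qed

lemma set_integral_mono_set_nonneg:
  assumes "set_integrable M B (f :: 'a \<Rightarrow> real)" "A \<in> sets M" "A \<subseteq> B" "\<And>x. 0 \<le> f x"
  shows "(LINT x:A|M. f x) \<le> (LINT x:B|M. f x)"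
proof -
  have iA: "set_integrable M A f" by (rule set_integrable_subset[OF assms(1-3)])
  show ?thesis
    using assms(1) iA unfolding set_lebesgue_integral_def set_integrable_def
    by (intro integral_mono) (use assms(3,4) in \<open>auto split: split_indicator\<close>)
qed

lemma poly_meas[measurable]: "(\<lambda>t. (cmod (\<Sum>i\<in>F. c i * exps i t))\<^sup>2) \<in> borel_measurable lebesgue"
  by measurable

lemma poly_bound: "\<bar>(cmod (\<Sum>i\<in>F. c i * exps i t))\<^sup>2\<bar> \<le> (\<Sum>i\<in>F. cmod (c i))\<^sup>2"
proof -
  have "cmod (\<Sum>i\<in>F. c i * exps i t) \<le> (\<Sum>i\<in>F. cmod (c i * exps i t))" by (rule norm_sum)
  also have "\<dots> = (\<Sum>i\<in>F. cmod (c i))" by (simp add: norm_mult)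
  finally show ?thesis by (simp add: power_mono)
qed

lemma full_norm:
  assumes "finite F"
  shows "(LINT t:{-pi..pi}|lebesgue. (cmod (\<Sum>i\<in>F. c i * exps i t))\<^sup>2) = 2*pi * (\<Sum>i\<in>F. (cmod (c i))\<^sup>2)"
proof -
  have "complex_of_real (LINT t:{-pi..pi}|lebesgue. (cmod (\<Sum>i\<in>F. c i * exps i t))\<^sup>2)
     = (\<Sum>i\<in>F. \<Sum>j\<in>F. c i * cnj (c j) * gA {-pi..pi} (i - j))"
    by (rule gram[OF Tper_sets Tper_fin assms])
  also have "\<dots> = (\<Sum>i\<in>F. c i * cnj (c i) * (2*pi))"
    unfolding gA_full using assms by (simp add: if_distrib cong: if_cong)
  also have "\<dots> = (\<Sum>i\<in>F. complex_of_real (2*pi * (cmod (c i))\<^sup>2))"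
    by (rule sum.cong) (simp, simp only: of_real_mult complex_norm_square, simp add: mult_ac)
  also have "\<dots> = complex_of_real (2*pi * (\<Sum>i\<in>F. (cmod (c i))\<^sup>2))"
    by (simp only: of_real_sum sum_distrib_left)
  finally show ?thesis by (simp only: of_real_eq_iff)
qed

lemma bessel:
  assumes S: "S \<in> sets lebesgue" "S \<subseteq> {-pi..pi}" and P: "finite P"
  shows "(\<Sum>n\<in>P. (cmod (gA S n))\<^sup>2) \<le> 2*pi * measure lebesgue S"
proof -
  have fin: "emeasure lebesgue S < \<infinity>"
    using emeasure_mono[OF S(2), of lebesgue] Tper_fin by (simp add: le_less_trans)
  define X where "X = (\<Sum>n\<in>P. (cmod (gA S n))\<^sup>2)"
  define a where "a n = cnj (gA S n) / (2*pi)" for n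
  define Pf where "Pf t = (\<Sum>i\<in>P. a i * exps i t)" for t
  have intPf: "set_integrable lebesgue S Pf"
    unfolding Pf_def using set_integrable_exps[OF S(1) fin]
    by (intro set_integrable_sum') simp
  have i1: "set_integrable lebesgue S (\<lambda>t. (cmod (Pf t))\<^sup>2)"
    unfolding Pf_def by (rule set_integrable_bounded_real[OF S(1) fin poly_meas poly_bound])
  have i1T: "set_integrable lebesgue {-pi..pi} (\<lambda>t. (cmod (Pf t))\<^sup>2)"
    unfolding Pf_def by (rule set_integrable_bounded_real[OF Tper_sets Tper_fin poly_meas poly_bound])
  have i2: "set_integrable lebesgue S (\<lambda>t. Re (Pf t))"
  proof -
    have e: "(\<lambda>x. indicat_real S x *\<^sub>R Re (Pf x)) = (\<lambda>x. Re (indicat_real S x *\<^sub>R Pf x))" by simp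
    show ?thesis using intPf unfolding set_integrable_def e
      by (rule integrable_bounded_linear[OF bounded_linear_Re])
  qed
  have i0: "set_integrable lebesgue S (\<lambda>t. 1::real)"
    unfolding set_integrable_def
    using S(1) fin by (metis has_bochner_integral_indicator integrable.intros infinity_ennreal_def)
  have pw: "(cmod (1 - Pf t))\<^sup>2 = 1 - 2 * Re (Pf t) + (cmod (Pf t))\<^sup>2" for t
    by (simp only: cmod_power2) (simp add: power2_eq_square algebra_simps)
  have "0 \<le> (LINT t:S|lebesgue. (cmod (1 - Pf t))\<^sup>2)"
    unfolding set_lebesgue_integral_def by (rule Bochner_Integration.integral_nonneg) (auto split: split_indicator)
  also have "\<dots> = (LINT t:S|lebesgue. 1) - 2 * (LINT t:S|lebesgue. Re (Pf t)) + (LINT t:S|lebesgue. (cmod (Pf t))\<^sup>2)"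
    unfolding pw using i0 i1 i2 by (simp add: set_integral_add set_integral_diff)
  also have "(LINT t:S|lebesgue. 1) = measure lebesgue S"
    using set_integral_const[OF S(1), of "1::real"] fin by simp
  also have "(LINT t:S|lebesgue. Re (Pf t)) = Re (LINT t:S|lebesgue. Pf t)"
    by (rule set_integral_Re[OF intPf])
  also have "(LINT t:S|lebesgue. Pf t) = (\<Sum>i\<in>P. a i * gA S i)"
    unfolding Pf_def gA_def using set_integrable_exps[OF S(1) fin]
    by (simp add: set_integral_sum')
  also have "\<dots> = complex_of_real (X / (2*pi))"
    unfolding a_def X_def by (simp add: cnorm_sq mult_ac sum_divide_distrib)
  also have "(LINT t:S|lebesgue. (cmod (Pf t))\<^sup>2) \<le> (LINT t:{-pi..pi}|lebesgue. (cmod (Pf t))\<^sup>2)"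
    by (rule set_integral_mono_set_nonneg[OF i1T S(1) S(2)]) simp
  also have "\<dots> = 2*pi * (\<Sum>i\<in>P. (cmod (a i))\<^sup>2)"
    unfolding Pf_def by (rule full_norm[OF P])
  also have "\<dots> = X / (2*pi)"
    unfolding a_def X_def by (simp add: norm_divide power_divide sum_divide_distrib sum_distrib_left power2_eq_square)
  finally have "0 \<le> measure lebesgue S - X / (2*pi)" by simp
  thus ?thesis unfolding X_def by (simp add: field_simps)
qed


lemma gA_neg:
  "gA S (-n) = cnj (gA S n)"
proof -
  have "gA S (-n) = (LINT t:S|lebesgue. cnj (exps n t))"
    unfolding gA_def by (simp add: cnj_exps)
  also have "\<dots> = cnj (LINT t:S|lebesgue. exps n t)"
  proof -
    have e: "(\<lambda>x. indicat_real S x *\<^sub>R cnj (exps n x)) = (\<lambda>x. cnj (indicat_real S x *\<^sub>R exps n x))"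
      by (auto simp: indicator_def)
    show ?thesis unfolding set_lebesgue_integral_def e by (rule Bochner_Integration.integral_cnj)
  qed
  finally show ?thesis unfolding gA_def .
qed

lemma cmod_gA_neg: "cmod (gA S (-n)) = cmod (gA S n)"
  by (simp add: gA_neg)

lemma cmod_gA_swap: "cmod (gA S (i - j)) = cmod (gA S (j - i))"
  using cmod_gA_neg[of S "j - i"] by simp

lemma gA_zero:
  assumes "S \<in> sets lebesgue" "emeasure lebesgue S < \<infinity>"
  shows "gA S 0 = complex_of_real (measure lebesgue S)"
  unfolding gA_def exps_def using set_integral_const[OF assms(1), of "1::complex"] assms(2)
  by (simp add: scaleR_conv_of_real)

lemma large_coeffs_finite:
  assumes S: "S \<in> sets lebesgue" "S \<subseteq> {-pi..pi}" and d: "\<delta> > 0"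
  shows "finite {n. \<delta> < cmod (gA S n)}"
proof (rule ccontr)
  assume inf: "infinite {n. \<delta> < cmod (gA S n)}"
  define K where "K = nat \<lceil>2*pi * measure lebesgue S / \<delta>\<^sup>2\<rceil> + 1"
  obtain P where P: "P \<subseteq> {n. \<delta> < cmod (gA S n)}" "finite P" "card P = K"
    using infinite_arbitrarily_large[OF inf] by blast
  have "real K * \<delta>\<^sup>2 = (\<Sum>n\<in>P. \<delta>\<^sup>2)" using P by simp
  also have "\<dots> \<le> (\<Sum>n\<in>P. (cmod (gA S n))\<^sup>2)"
    using P d by (intro sum_mono power_mono) auto
  also have "\<dots> \<le> 2*pi * measure lebesgue S" by (rule bessel[OF S P(2)])
  finally have a: "real K * \<delta>\<^sup>2 \<le> 2*pi * measure lebesgue S" .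
  have "2*pi * measure lebesgue S / \<delta>\<^sup>2 < real K" unfolding K_def by linarith
  hence "2*pi * measure lebesgue S < real K * \<delta>\<^sup>2" using d by (simp add: field_simps)
  with a show False by simp
qed

lemma coeff_decay:
  assumes S: "S \<in> sets lebesgue" "S \<subseteq> {-pi..pi}" and d: "\<delta> > 0"
  shows "\<exists>D::int. D \<ge> 1 \<and> (\<forall>n. \<bar>n\<bar> \<ge> D \<longrightarrow> cmod (gA S n) \<le> \<delta>)"
proof -
  let ?B = "{n. \<delta> < cmod (gA S n)}"
  have fin: "finite ?B" by (rule large_coeffs_finite[OF S d])
  define D where "D = 1 + (\<Sum>n\<in>?B. \<bar>n\<bar>)"
  have "\<bar>n\<bar> < D" if "n \<in> ?B" for n
  proof -
    have "\<bar>n\<bar> \<le> (\<Sum>n\<in>?B. \<bar>n\<bar>)"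
      using member_le_sum[of n ?B abs] that fin by auto
    thus ?thesis unfolding D_def by simp
  qed
  moreover have "D \<ge> 1" unfolding D_def by (simp add: sum_nonneg)
  ultimately show ?thesis by (intro exI[of _ D]) (auto simp: not_less[symmetric])
qed

lemma sum_minus_if:
  assumes "finite F"
  shows "(\<Sum>j\<in>F - {i}. h j) = (\<Sum>j\<in>F. if j = i then 0 else h j)"
  by (rule sum.mono_neutral_cong_left) (use assms in auto)

lemma riesz_from_rows:
  assumes S: "S \<in> sets lebesgue" "S \<subseteq> {-pi..pi}"
    and R: "R < measure lebesgue S" "0 \<le> R"
    and rows: "\<And>F i. finite F \<Longrightarrow> F \<subseteq> \<Lambda> \<Longrightarrow> i \<in> F \<Longrightarrow>
                 (\<Sum>j\<in>F - {i}. cmod (gA S (i - j))) \<le> R"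
  shows "riesz_sequence_L2 S \<Lambda> exps"
proof -
  have fin: "emeasure lebesgue S < \<infinity>"
    using emeasure_mono[OF S(2), of lebesgue] Tper_fin by (simp add: le_less_trans)
  let ?m = "measure lebesgue S"
  have main: "\<bar>(LINT t:S|lebesgue. (cmod (\<Sum>i\<in>F. c i * exps i t))\<^sup>2) - ?m * (\<Sum>i\<in>F. (cmod (c i))\<^sup>2)\<bar>
      \<le> R * (\<Sum>i\<in>F. (cmod (c i))\<^sup>2)" if F: "finite F" "F \<subseteq> \<Lambda>" for F c
  proof -
    define V where "V = (LINT t:S|lebesgue. (cmod (\<Sum>i\<in>F. c i * exps i t))\<^sup>2)"
    define E where "E = (\<Sum>i\<in>F. \<Sum>j\<in>F - {i}. c i * cnj (c j) * gA S (i - j))"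
    have "complex_of_real V = (\<Sum>i\<in>F. \<Sum>j\<in>F. c i * cnj (c j) * gA S (i - j))"
      unfolding V_def by (rule gram[OF S(1) fin F(1)])
    also have "\<dots> = (\<Sum>i\<in>F. c i * cnj (c i) * gA S 0 + (\<Sum>j\<in>F - {i}. c i * cnj (c j) * gA S (i - j)))"
    proof (rule sum.cong[OF refl])
      fix i assume "i \<in> F"
      show "(\<Sum>j\<in>F. c i * cnj (c j) * gA S (i - j)) = c i * cnj (c i) * gA S 0 + (\<Sum>j\<in>F - {i}. c i * cnj (c j) * gA S (i - j))"
        using sum.remove[OF F(1) \<open>i \<in> F\<close>, of "\<lambda>j. c i * cnj (c j) * gA S (i - j)"] by simp
    qed
    also have "\<dots> = complex_of_real (?m * (\<Sum>i\<in>F. (cmod (c i))\<^sup>2)) + E"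
      unfolding E_def sum.distrib gA_zero[OF S(1) fin]
      by (simp add: sum_distrib_left mult_ac flip: cnorm_sq)
    finally have VE: "complex_of_real (V - ?m * (\<Sum>i\<in>F. (cmod (c i))\<^sup>2)) = E" by simp
    have "cmod E \<le> (\<Sum>i\<in>F. \<Sum>j\<in>F - {i}. cmod (c i) * cmod (c j) * cmod (gA S (i - j)))"
      unfolding E_def
      by (rule order_trans[OF norm_sum sum_mono], rule order_trans[OF norm_sum sum_mono])
         (simp add: norm_mult)
    also have "\<dots> \<le> (\<Sum>i\<in>F. \<Sum>j\<in>F - {i}. ((cmod (c i))\<^sup>2/2 + (cmod (c j))\<^sup>2/2) * cmod (gA S (i - j)))"
    proof (intro sum_mono mult_right_mono)
      fix i j
      show "cmod (c i) * cmod (c j) \<le> (cmod (c i))\<^sup>2 / 2 + (cmod (c j))\<^sup>2 / 2"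
        using sum_squares_bound[of "cmod (c i)" "cmod (c j)"] by (simp add: power2_eq_square)
    qed simp
    also have "\<dots> = (\<Sum>i\<in>F. \<Sum>j\<in>F - {i}. (cmod (c i))\<^sup>2/2 * cmod (gA S (i - j)))
                  + (\<Sum>i\<in>F. \<Sum>j\<in>F - {i}. (cmod (c j))\<^sup>2/2 * cmod (gA S (i - j)))"
      by (simp add: distrib_right sum.distrib)
    also have "(\<Sum>i\<in>F. \<Sum>j\<in>F - {i}. (cmod (c j))\<^sup>2/2 * cmod (gA S (i - j)))
             = (\<Sum>i\<in>F. \<Sum>j\<in>F - {i}. (cmod (c i))\<^sup>2/2 * cmod (gA S (i - j)))"
    proof -
      have "(\<Sum>i\<in>F. \<Sum>j\<in>F - {i}. (cmod (c j))\<^sup>2/2 * cmod (gA S (i - j)))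
          = (\<Sum>i\<in>F. \<Sum>j\<in>F. if j = i then 0 else (cmod (c j))\<^sup>2/2 * cmod (gA S (i - j)))"
        using F(1) by (intro sum.cong refl sum_minus_if)
      also have "\<dots> = (\<Sum>j\<in>F. \<Sum>i\<in>F. if j = i then 0 else (cmod (c j))\<^sup>2/2 * cmod (gA S (i - j)))"
        by (rule sum.swap)
      also have "\<dots> = (\<Sum>j\<in>F. \<Sum>i\<in>F - {j}. (cmod (c j))\<^sup>2/2 * cmod (gA S (j - i)))"
        by (rule sum.cong[OF refl], subst sum_minus_if[OF F(1)], rule sum.cong[OF refl])
           (auto simp: cmod_gA_swap)
      finally show ?thesis .
    qed
    also have "(\<Sum>i\<in>F. \<Sum>j\<in>F - {i}. (cmod (c i))\<^sup>2/2 * cmod (gA S (i - j)))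
             \<le> (\<Sum>i\<in>F. (cmod (c i))\<^sup>2/2 * R)"
    proof (rule sum_mono)
      fix i assume i: "i \<in> F"
      have "(\<Sum>j\<in>F - {i}. (cmod (c i))\<^sup>2/2 * cmod (gA S (i - j)))
           = (cmod (c i))\<^sup>2/2 * (\<Sum>j\<in>F - {i}. cmod (gA S (i - j)))"
        by (simp add: sum_distrib_left)
      also have "\<dots> \<le> (cmod (c i))\<^sup>2/2 * R"
        by (rule mult_left_mono[OF rows[OF F i]]) simp
      finally show "(\<Sum>j\<in>F - {i}. (cmod (c i))\<^sup>2/2 * cmod (gA S (i - j))) \<le> (cmod (c i))\<^sup>2/2 * R" .
    qed
    finally have "cmod E \<le> R * (\<Sum>i\<in>F. (cmod (c i))\<^sup>2)"
      by (simp add: sum_distrib_left sum_distrib_right mult_ac)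
    moreover have "cmod E = \<bar>V - ?m * (\<Sum>i\<in>F. (cmod (c i))\<^sup>2)\<bar>"
      by (simp only: VE[symmetric] norm_of_real)
    ultimately show ?thesis unfolding V_def by simp
  qed
  show ?thesis
    unfolding riesz_sequence_L2_def L2S_norm2_def
  proof (rule exI[of _ "(?m - R)/(2*pi)"], rule exI[of _ "(?m + R)/(2*pi)"], intro conjI allI impI)
    show "0 < (?m - R)/(2*pi)" using R by simp
    show "0 < (?m + R)/(2*pi)" using R by simp
    fix F c assume F: "finite F" "F \<subseteq> \<Lambda>"
    note m = main[OF F, of c]
    have l: "(?m - R) * (\<Sum>i\<in>F. (cmod (c i))\<^sup>2) \<le> (LINT t:S|lebesgue. (cmod (\<Sum>i\<in>F. c i * exps i t))\<^sup>2)"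
      and u: "(LINT t:S|lebesgue. (cmod (\<Sum>i\<in>F. c i * exps i t))\<^sup>2) \<le> (?m + R) * (\<Sum>i\<in>F. (cmod (c i))\<^sup>2)"
      using m by (auto simp: abs_le_iff algebra_simps)
    show "(?m - R)/(2*pi) * (\<Sum>i\<in>F. (cmod (c i))\<^sup>2)
          \<le> (LINT t:S|lebesgue. (cmod (\<Sum>i\<in>F. c i * exps i t))\<^sup>2) / (2*pi)"
      using divide_right_mono[OF l, of "2*pi"] by simp
    show "(LINT t:S|lebesgue. (cmod (\<Sum>i\<in>F. c i * exps i t))\<^sup>2) / (2*pi)
          \<le> (?m + R)/(2*pi) * (\<Sum>i\<in>F. (cmod (c i))\<^sup>2)"
      using divide_right_mono[OF u, of "2*pi"] by simp
  qed
qed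


lemma card_multiples_le:
  assumes a: "a \<ge> (1::nat)"
  shows "real (card {q\<in>{1..L}. a dvd q}) \<le> real L / real a"
proof -
  have "{q\<in>{1..L}. a dvd q} \<subseteq> (\<lambda>k. a*k) ` {1..L div a}"
  proof
    fix q assume q: "q \<in> {q\<in>{1..L}. a dvd q}"
    then obtain k where k: "q = a*k" by auto
    have "k \<ge> 1" using q k by (cases k) auto
    moreover have "k \<le> L div a" using q k a
      by (metis (no_types, lifting) One_nat_def atLeastAtMost_iff div_le_mono mem_Collect_eq
          nonzero_mult_div_cancel_left not_one_le_zero)
    ultimately show "q \<in> (\<lambda>k. a*k) ` {1..L div a}" using k by auto
  qed
  hence "card {q\<in>{1..L}. a dvd q} \<le> card ((\<lambda>k. a*k) ` {1..L div a})"
    by (intro card_mono) auto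
  also have "\<dots> \<le> card {1..L div a}" by (rule card_image_le) simp
  also have "\<dots> = L div a" by simp
  finally have "real (card {q\<in>{1..L}. a dvd q}) \<le> real (L div a)" by simp
  also have "\<dots> \<le> real L / real a" by (rule of_nat_div_le_of_nat)
  finally show ?thesis .
qed

lemma divisors_prod_le:
  assumes "q \<ge> 1" "m \<ge> (1::nat)"
  shows "card {m'\<in>{1..<N}. m' dvd q*m} \<le> card {(a,b)\<in>{1..<N}\<times>{1..<N}. a dvd q \<and> b dvd m}"
proof -
  let ?D = "{(a,b)\<in>{1..<N}\<times>{1..<N}. a dvd q \<and> b dvd m}"
  have "{m'\<in>{1..<N}. m' dvd q*m} \<subseteq> (\<lambda>(a,b). a*b) ` ?D"
  proof
    fix m' assume h: "m' \<in> {m'\<in>{1..<N}. m' dvd q*m}"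
    then obtain a b where ab: "m' = a*b" "a dvd q" "b dvd m"
      by (auto elim: dvd_productE)
    have "a \<ge> 1" "b \<ge> 1" using h ab by (auto simp: Suc_le_eq)
    hence le: "a \<le> m'" "b \<le> m'" using ab by auto
    have lt: "a < N" "b < N" using le h by auto
    have "(a,b) \<in> ?D" using h ab \<open>a \<ge> 1\<close> \<open>b \<ge> 1\<close> lt by auto
    thus "m' \<in> (\<lambda>(a,b). a*b) ` ?D" using ab by force
  qed
  moreover have finD: "finite ?D" by (rule finite_subset[of _ "{1..<N}\<times>{1..<N}"]) auto
  ultimately have "card {m'\<in>{1..<N}. m' dvd q*m} \<le> card ((\<lambda>(a,b). a*b) ` ?D)"
    by (intro card_mono) auto
  also have "\<dots> \<le> card ?D" by (rule card_image_le[OF finD])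
  finally show ?thesis .
qed

lemma fiber_le:
  assumes "n \<ge> (1::nat)"
  shows "card {y\<in>{1..L}\<times>{1..<N}. fst y * snd y = n} \<le> card {m'\<in>{1..<N}. m' dvd n}"
proof -
  let ?F = "{y\<in>{1..L}\<times>{1..<N}. fst y * snd y = n}"
  have inj: "inj_on snd ?F"
  proof (rule inj_onI)
    fix x y assume "x \<in> ?F" "y \<in> ?F" "snd x = snd y"
    thus "x = y" by (cases x, cases y) auto
  qed
  have "card ?F = card (snd ` ?F)" by (rule card_image[OF inj, symmetric])
  also have "\<dots> \<le> card {m'\<in>{1..<N}. m' dvd n}"
    by (intro card_mono) auto
  finally show ?thesis .
qed

definition Hs :: "nat \<Rightarrow> real" where "Hs N = (\<Sum>a\<in>{1..<N}. 1 / real a)"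

lemma energy_bound:
  fixes L N :: nat
  defines "X \<equiv> {1..L}\<times>{1..<N}"
  defines "r \<equiv> (\<lambda>n. card {y\<in>X. fst y * snd y = n})"
  shows "(\<Sum>x\<in>X. real (r (fst x * snd x))) \<le> real L * real N * (Hs N)\<^sup>2"
proof -
  let ?Y = "{1..<N}\<times>{1..<N}"
  let ?D = "\<lambda>q m. {(a,b)\<in>?Y. a dvd q \<and> b dvd m}"
  have "(\<Sum>x\<in>X. real (r (fst x * snd x))) \<le> (\<Sum>x\<in>X. real (card (?D (fst x) (snd x))))"
  proof (rule sum_mono)
    fix x assume x: "x \<in> X"
    hence "fst x \<ge> 1" "snd x \<ge> 1" unfolding X_def by auto
    hence "fst x * snd x \<ge> 1" by simp
    have "r (fst x * snd x) \<le> card {m'\<in>{1..<N}. m' dvd fst x * snd x}"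
      unfolding r_def X_def by (rule fiber_le) fact
    also have "\<dots> \<le> card (?D (fst x) (snd x))"
      by (rule divisors_prod_le) fact+
    finally show "real (r (fst x * snd x)) \<le> real (card (?D (fst x) (snd x)))" by simp
  qed
  also have "\<dots> = (\<Sum>x\<in>X. \<Sum>y\<in>?Y. (if fst y dvd fst x then 1 else 0) * (if snd y dvd snd x then 1 else (0::real)))"
  proof (rule sum.cong[OF refl])
    fix x
    have eq: "?D (fst x) (snd x) = {y\<in>?Y. fst y dvd fst x \<and> snd y dvd snd x}" by auto
    have "real (card (?D (fst x) (snd x))) = (\<Sum>y\<in>{y\<in>?Y. fst y dvd fst x \<and> snd y dvd snd x}. 1)"
      unfolding eq by simp
    also have "\<dots> = (\<Sum>y\<in>?Y. if fst y dvd fst x \<and> snd y dvd snd x then 1 else 0)"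
      by (rule sum.inter_filter) simp
    also have "\<dots> = (\<Sum>y\<in>?Y. (if fst y dvd fst x then 1 else 0) * (if snd y dvd snd x then 1 else (0::real)))"
      by (rule sum.cong) auto
    finally show "real (card (?D (fst x) (snd x))) = (\<Sum>y\<in>?Y. (if fst y dvd fst x then 1 else 0) * (if snd y dvd snd x then 1 else (0::real)))"
      .
  qed
  also have "\<dots> = (\<Sum>y\<in>?Y. \<Sum>x\<in>X. (if fst y dvd fst x then 1 else 0) * (if snd y dvd snd x then 1 else (0::real)))"
    by (rule sum.swap)
  also have "\<dots> = (\<Sum>y\<in>?Y. real (card {q\<in>{1..L}. fst y dvd q}) * real (card {m\<in>{1..<N}. snd y dvd m}))"
  proof (rule sum.cong[OF refl])
    fix y
    have "(\<Sum>x\<in>X. (if fst y dvd fst x then 1 else 0) * (if snd y dvd snd x then 1 else (0::real)))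
        = (\<Sum>q\<in>{1..L}. if fst y dvd q then 1 else 0) * (\<Sum>m\<in>{1..<N}. if snd y dvd m then 1 else (0::real))"
      unfolding X_def sum_product by (simp add: sum.cartesian_product case_prod_beta)
    also have "\<dots> = real (card {q\<in>{1..L}. fst y dvd q}) * real (card {m\<in>{1..<N}. snd y dvd m})"
      by (simp add: sum.If_cases Int_def conj_commute)
    finally show "(\<Sum>x\<in>X. (if fst y dvd fst x then 1 else 0) * (if snd y dvd snd x then 1 else (0::real)))
        = real (card {q\<in>{1..L}. fst y dvd q}) * real (card {m\<in>{1..<N}. snd y dvd m})" .
  qed
  also have "\<dots> \<le> (\<Sum>y\<in>?Y. (real L / real (fst y)) * (real N / real (snd y)))"
  proof (rule sum_mono)
    fix y assume y: "y \<in> ?Y"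
    have c2: "real (card {m\<in>{1..<N}. snd y dvd m}) \<le> real N / real (snd y)"
    proof -
      have "card {m\<in>{1..<N}. snd y dvd m} \<le> card {m\<in>{1..N}. snd y dvd m}"
        by (rule card_mono) auto
      hence "real (card {m\<in>{1..<N}. snd y dvd m}) \<le> real (card {m\<in>{1..N}. snd y dvd m})" by simp
      also have "\<dots> \<le> real N / real (snd y)" by (rule card_multiples_le) (use y in auto)
      finally show ?thesis .
    qed
    show "real (card {q\<in>{1..L}. fst y dvd q}) * real (card {m\<in>{1..<N}. snd y dvd m})
        \<le> (real L / real (fst y)) * (real N / real (snd y))"
      by (rule mult_mono[OF card_multiples_le c2]) (use y in auto)
  qed
  also have "\<dots> = real L * real N * (Hs N)\<^sup>2"
    unfolding Hs_def power2_eq_square sum_product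
    by (simp add: sum.cartesian_product case_prod_beta sum_distrib_left mult_ac)
  finally show ?thesis .
qed


lemma averaging:
  fixes G :: "int \<Rightarrow> real" and L N :: nat and Bb eps :: real
  assumes G0: "\<And>n. 0 \<le> G n" and bes: "\<And>P. finite P \<Longrightarrow> (\<Sum>n\<in>P. (G n)\<^sup>2) \<le> Bb"
    and eps: "eps > 0" and L: "L \<ge> 1" and big: "Bb * real N * (Hs N)\<^sup>2 \<le> real L * eps\<^sup>2"
  shows "\<exists>l\<in>{1..L}. (\<Sum>m\<in>{1..<N}. G (int m * int l)) \<le> eps"
proof (rule ccontr)
  assume "\<not> ?thesis"
  hence bad: "\<And>l. l \<in> {1..L} \<Longrightarrow> eps < (\<Sum>m\<in>{1..<N}. G (int m * int l))" by (meson not_le)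
  define X where "X = {1..L}\<times>{1..<N}"
  define \<phi> where "\<phi> = (\<lambda>x::nat\<times>nat. fst x * snd x)"
  define r where "r = (\<lambda>n. card {y\<in>X. fst y * snd y = n})"
  have finX: "finite X" unfolding X_def by simp
  have "real L * eps = (\<Sum>l\<in>{1..L}. eps)" by simp
  also have "\<dots> < (\<Sum>l\<in>{1..L}. \<Sum>m\<in>{1..<N}. G (int m * int l))"
    by (rule sum_strict_mono) (use L bad in auto)
  also have "\<dots> = (\<Sum>x\<in>X. G (int (\<phi> x)))"
    unfolding X_def \<phi>_def by (simp add: sum.cartesian_product case_prod_beta mult.commute)
  also have "\<dots> = (\<Sum>n\<in>\<phi> ` X. \<Sum>x\<in>{x\<in>X. \<phi> x = n}. G (int (\<phi> x)))"
    by (rule sum.image_gen[OF finX])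
  also have "\<dots> = (\<Sum>n\<in>\<phi> ` X. real (r n) * G (int n))"
    unfolding r_def \<phi>_def by (intro sum.cong refl) simp
  finally have lt: "real L * eps < (\<Sum>n\<in>\<phi> ` X. real (r n) * G (int n))" .
  have c1: "(\<Sum>n\<in>\<phi> ` X. real (r n) * G (int n))\<^sup>2 \<le> (\<Sum>n\<in>\<phi> ` X. (real (r n))\<^sup>2) * (\<Sum>n\<in>\<phi> ` X. (G (int n))\<^sup>2)"
    by (rule Cauchy_Schwarz_ineq_sum)
  have c2: "(\<Sum>n\<in>\<phi> ` X. (G (int n))\<^sup>2) \<le> Bb"
  proof -
    have "(\<Sum>n\<in>\<phi> ` X. (G (int n))\<^sup>2) = (\<Sum>k\<in>int ` (\<phi> ` X). (G k)\<^sup>2)"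
      by (rule sum.reindex[symmetric, unfolded o_def]) simp
    also have "\<dots> \<le> Bb" by (rule bes) (simp add: finX)
    finally show ?thesis .
  qed
  have c3: "(\<Sum>n\<in>\<phi> ` X. (real (r n))\<^sup>2) = (\<Sum>x\<in>X. real (r (\<phi> x)))"
  proof -
    have "(\<Sum>x\<in>X. real (r (\<phi> x))) = (\<Sum>n\<in>\<phi> ` X. \<Sum>x\<in>{x\<in>X. \<phi> x = n}. real (r (\<phi> x)))"
      by (rule sum.image_gen[OF finX])
    also have "\<dots> = (\<Sum>n\<in>\<phi> ` X. (real (r n))\<^sup>2)"
      unfolding r_def \<phi>_def by (intro sum.cong refl) (simp add: power2_eq_square)
    finally show ?thesis by simp
  qed
  have c4: "(\<Sum>x\<in>X. real (r (\<phi> x))) \<le> real L * real N * (Hs N)\<^sup>2"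
    unfolding X_def r_def \<phi>_def by (rule energy_bound)
  have Bb0: "0 \<le> Bb" using bes[of "{}"] by simp
  have "(\<Sum>n\<in>\<phi> ` X. real (r n) * G (int n))\<^sup>2 \<le> (\<Sum>n\<in>\<phi> ` X. (real (r n))\<^sup>2) * Bb"
    by (rule order_trans[OF c1 mult_left_mono[OF c2]]) (simp add: sum_nonneg)
  also have "\<dots> \<le> real L * real N * (Hs N)\<^sup>2 * Bb"
    unfolding c3 by (rule mult_right_mono[OF c4 Bb0])
  finally have le: "(\<Sum>n\<in>\<phi> ` X. real (r n) * G (int n))\<^sup>2 \<le> real L * real N * (Hs N)\<^sup>2 * Bb" .
  have "(real L * eps)\<^sup>2 < (\<Sum>n\<in>\<phi> ` X. real (r n) * G (int n))\<^sup>2"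
    by (rule power_strict_mono[OF lt]) (use eps in auto)
  also note le
  also have "real L * real N * (Hs N)\<^sup>2 * Bb = real L * (Bb * real N * (Hs N)\<^sup>2)" by simp
  also have "\<dots> \<le> real L * (real L * eps\<^sup>2)" by (rule mult_left_mono[OF big]) simp
  finally show False by (simp add: power2_eq_square mult_ac)
qed


lemma harm_upper: "n \<ge> 1 \<Longrightarrow> (\<Sum>a\<in>{1..n}. 1 / real a) \<le> 1 + ln (real n)"
proof (induction n rule: dec_induct)
  case base
  then show ?case by simp
next
  case (step n)
  have n: "real n \<ge> 1" using step by simp
  have "ln (real n / real (Suc n)) \<le> real n / real (Suc n) - 1"
    by (rule ln_le_minus_one) (use n in simp)
  also have "\<dots> = - 1 / real (Suc n)" by (simp add: field_simps)
  finally have "1 / real (Suc n) \<le> ln (real (Suc n)) - ln (real n)"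
    using n by (simp add: ln_div)
  moreover have "(\<Sum>a\<in>{1..Suc n}. 1 / real a) = (\<Sum>a\<in>{1..n}. 1 / real a) + 1 / real (Suc n)"
    by simp
  ultimately show ?case using step.IH by simp
qed

lemma Hs_le: "N \<ge> 1 \<Longrightarrow> Hs N \<le> 1 + ln (real N)"
proof -
  assume N: "N \<ge> 1"
  have "Hs N \<le> (\<Sum>a\<in>{1..N}. 1 / real a)"
    unfolding Hs_def by (rule sum_mono2) auto
  also have "\<dots> \<le> 1 + ln (real N)" by (rule harm_upper[OF N])
  finally show ?thesis .
qed

lemma Hs_nonneg: "0 \<le> Hs N" unfolding Hs_def by (simp add: sum_nonneg)

lemma Hs_growth:
  assumes b: "\<beta> > 0" and N: "N \<ge> 1"
  shows "Hs N \<le> (1 + 1/\<beta>) * real N powr \<beta>"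
proof -
  have N1: "real N \<ge> 1" using N by simp
  have p1: "real N powr \<beta> \<ge> 1" using N1 b by (simp add: ge_one_powr_ge_zero)
  have "\<beta> * ln (real N) = ln (real N powr \<beta>)" using N1 by (simp add: ln_powr)
  also have "\<dots> \<le> real N powr \<beta> - 1" by (rule ln_le_minus_one) (use p1 N in simp)
  finally have "ln (real N) \<le> real N powr \<beta> / \<beta>" using b by (simp add: field_simps)
  hence "1 + ln (real N) \<le> real N powr \<beta> + real N powr \<beta> / \<beta>" using p1 by simp
  also have "\<dots> = (1 + 1/\<beta>) * real N powr \<beta>" by (simp add: field_simps)
  finally show ?thesis using Hs_le[OF N] by simp
qed

lemma good_steps:
  fixes G :: "int \<Rightarrow> real" and Bb eps :: real
  assumes G0: "\<And>n. 0 \<le> G n" and bes: "\<And>P. finite P \<Longrightarrow> (\<Sum>n\<in>P. (G n)\<^sup>2) \<le> Bb"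
    and eps: "eps > 0" and a: "\<alpha> > 1"
  shows "\<exists>C>0. \<forall>N\<ge>1. \<exists>l\<ge>1. (\<Sum>m\<in>{1..<N}. G (int m * int l)) \<le> eps \<and> real l < C * real N powr \<alpha>"
proof -
  define \<beta> where "\<beta> = (\<alpha> - 1) / 2"
  have b: "\<beta> > 0" using a unfolding \<beta>_def by simp
  have Bb0: "0 \<le> Bb" using bes[of "{}"] by simp
  define K0 where "K0 = Bb * (1 + 1/\<beta>)\<^sup>2 / eps\<^sup>2"
  have K00: "K0 \<ge> 0" unfolding K0_def using Bb0 by simp
  define C where "C = K0 + 3"
  have "\<exists>l\<ge>1. (\<Sum>m\<in>{1..<N}. G (int m * int l)) \<le> eps \<and> real l < C * real N powr \<alpha>" if N: "N \<ge> 1" for N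
  proof -
    have N1: "real N \<ge> 1" using N by simp
    define L where "L = nat \<lceil>Bb * real N * (Hs N)\<^sup>2 / eps\<^sup>2\<rceil> + 1"
    have L1: "L \<ge> 1" unfolding L_def by simp
    have Lr: "real L \<le> Bb * real N * (Hs N)\<^sup>2 / eps\<^sup>2 + 2"
      unfolding L_def using Bb0 by (simp add: of_nat_nat) linarith?
    have big: "Bb * real N * (Hs N)\<^sup>2 \<le> real L * eps\<^sup>2"
    proof -
      have "Bb * real N * (Hs N)\<^sup>2 / eps\<^sup>2 \<le> real L" unfolding L_def by linarith
      thus ?thesis using eps by (simp add: field_simps)
    qed
    obtain l where l: "l \<in> {1..L}" "(\<Sum>m\<in>{1..<N}. G (int m * int l)) \<le> eps"
      using averaging[OF G0 bes eps L1 big] by blast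
    have H: "(Hs N)\<^sup>2 \<le> ((1 + 1/\<beta>) * real N powr \<beta>)\<^sup>2"
      by (rule power_mono[OF Hs_growth[OF b N] Hs_nonneg])
    have pw: "real N * (real N powr \<beta>)\<^sup>2 = real N powr \<alpha>"
    proof -
      have "real N * (real N powr \<beta>)\<^sup>2 = real N powr 1 * (real N powr \<beta> * real N powr \<beta>)"
        using N1 by (simp add: power2_eq_square)
      also have "\<dots> = real N powr (1 + \<beta> + \<beta>)" by (simp only: powr_add)
      also have "1 + \<beta> + \<beta> = \<alpha>" unfolding \<beta>_def by simp
      finally show ?thesis .
    qed
    have pa: "real N powr \<alpha> \<ge> 1" using N1 a by (simp add: ge_one_powr_ge_zero)
    have "Bb * real N * (Hs N)\<^sup>2 / eps\<^sup>2 \<le> Bb * real N * ((1 + 1/\<beta>) * real N powr \<beta>)\<^sup>2 / eps\<^sup>2"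
      using H Bb0 eps by (intro divide_right_mono mult_left_mono) auto
    also have "\<dots> = K0 * real N powr \<alpha>"
      unfolding K0_def pw[symmetric] power_mult_distrib by (simp add: mult_ac)
    finally have "real L \<le> K0 * real N powr \<alpha> + 2" using Lr by simp
    also have "\<dots> < C * real N powr \<alpha>" unfolding C_def using pa by (simp add: algebra_simps)
    finally have "real l < C * real N powr \<alpha>" using l(1) by simp
    thus ?thesis using l by auto
  qed
  moreover have "C > 0" unfolding C_def using K00 by simp
  ultimately show ?thesis by blast
qed


fun Mseq :: "(nat \<Rightarrow> nat) \<Rightarrow> (nat \<Rightarrow> int) \<Rightarrow> nat \<Rightarrow> int" where
  "Mseq st D 0 = 0"
| "Mseq st D (Suc j) = Mseq st D j + int j * int (st j) + D (Suc j)"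

definition blk :: "(nat \<Rightarrow> nat) \<Rightarrow> (nat \<Rightarrow> int) \<Rightarrow> nat \<Rightarrow> int set" where
  "blk st D j = {Mseq st D j + int k * int (st j) | k. 1 \<le> k \<and> k \<le> j}"

definition topb :: "(nat \<Rightarrow> nat) \<Rightarrow> (nat \<Rightarrow> int) \<Rightarrow> nat \<Rightarrow> int" where
  "topb st D j = Mseq st D j + int j * int (st j)"

lemma blk_image: "blk st D j = (\<lambda>k. Mseq st D j + int k * int (st j)) ` {1..j}"
  unfolding blk_def by auto

lemma finite_blk[simp]: "finite (blk st D j)"
  unfolding blk_image by simp

lemma card_blk: "card (blk st D j) \<le> j"
  unfolding blk_image using card_image_le[of "{1..j}"] by simp

lemma blk_bounds:
  assumes "st j \<ge> 1" "a \<in> blk st D j"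
  shows "Mseq st D j + 1 \<le> a" "a \<le> topb st D j"
proof -
  obtain k where k: "a = Mseq st D j + int k * int (st j)" "1 \<le> k" "k \<le> j"
    using assms(2) unfolding blk_def by auto
  have "1 \<le> k * st j" using k(2) assms(1) by (simp add: Suc_le_eq)
  hence "int k * int (st j) \<ge> 1" by (metis of_nat_1 of_nat_le_iff of_nat_mult)
  thus "Mseq st D j + 1 \<le> a" using k(1) by simp
  have "int k * int (st j) \<le> int j * int (st j)" using k(3)
    by (intro mult_right_mono) auto
  thus "a \<le> topb st D j" unfolding topb_def using k(1) by simp
qed

lemma topb_mono:
  assumes D: "\<And>j. D j \<ge> 1"
  shows "j \<le> j' \<Longrightarrow> topb st D j \<le> topb st D j'"
proof (induction j' rule: dec_induct)
  case base then show ?case by simp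
next
  case (step n)
  have "topb st D n \<le> Mseq st D (Suc n)" using D[of "Suc n"] unfolding topb_def by simp
  also have "\<dots> \<le> topb st D (Suc n)" unfolding topb_def by simp
  finally show ?case using step.IH by simp
qed

lemma blk_sep:
  assumes D: "\<And>j. D j \<ge> 1" and l: "\<And>j. st j \<ge> 1"
    and jj: "j < j'" and a: "a \<in> blk st D j" and b: "b \<in> blk st D j'"
  shows "b - a \<ge> D j'"
proof -
  obtain p where p: "j' = Suc p" "j \<le> p" using jj by (cases j') auto
  have "a \<le> topb st D j" by (rule blk_bounds(2)[OF l a])
  also have "\<dots> \<le> topb st D p" by (rule topb_mono[OF D p(2)])
  finally have "a \<le> topb st D p" .
  moreover have "Mseq st D j' + 1 \<le> b" by (rule blk_bounds(1)[OF l b])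
  moreover have "Mseq st D j' = topb st D p + D j'" unfolding p(1) topb_def by simp
  ultimately show ?thesis by simp
qed

lemma blk_nonempty_pos: "a \<in> blk st D j \<Longrightarrow> j \<ge> 1"
  unfolding blk_def by auto

lemma sum_UN_le:
  fixes f :: "'a \<Rightarrow> real"
  assumes "finite I" "\<And>j. j \<in> I \<Longrightarrow> finite (A j)" "\<And>x. 0 \<le> f x"
  shows "sum f (\<Union>j\<in>I. A j) \<le> (\<Sum>j\<in>I. sum f (A j))"
  using assms
proof (induction I rule: finite_induct)
  case empty then show ?case by simp
next
  case (insert j I)
  have "sum f (\<Union>j\<in>insert j I. A j) = sum f (A j \<union> (\<Union>j\<in>I. A j))" by simp
  also have "\<dots> \<le> sum f (A j) + sum f (\<Union>j\<in>I. A j)"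
  proof -
    have "finite (A j)" "finite (\<Union>j\<in>I. A j)" using insert by auto
    from sum_Un[OF this, of f] show ?thesis using insert.prems(2) by (simp add: sum_nonneg)
  qed
  also have "sum f (\<Union>j\<in>I. A j) \<le> (\<Sum>j\<in>I. sum f (A j))" using insert by auto
  finally show ?case using insert by simp
qed

lemma geom_half: "(\<Sum>j\<in>{1..K}. 1 / 2^j :: real) \<le> 1"
proof -
  have "(\<Sum>j\<in>{1..K}. 1 / 2^j :: real) = 1 - 1/2^K"
  proof (induction K)
    case 0 then show ?case by simp
  next
    case (Suc K)
    have "(\<Sum>j\<in>{1..Suc K}. 1 / 2^j :: real) = (\<Sum>j\<in>{1..K}. 1 / 2^j) + 1/2^Suc K" by simp
    also have "\<dots> = 1 - 1/2^K + 1/2^Suc K" using Suc by simp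
    also have "\<dots> = 1 - 1/2^Suc K" by simp
    finally show ?case .
  qed
  thus ?thesis by simp
qed

lemma sum_inj_le:
  fixes f :: "'b \<Rightarrow> real"
  assumes "inj_on h A" "h ` A \<subseteq> B" "finite B" "\<And>x. x \<in> B \<Longrightarrow> 0 \<le> f x"
  shows "(\<Sum>x\<in>A. f (h x)) \<le> sum f B"
proof -
  have "(\<Sum>x\<in>A. f (h x)) = sum f (h ` A)" by (simp add: sum.reindex[OF assms(1)])
  also have "\<dots> \<le> sum f B" by (rule sum_mono2[OF assms(3) assms(2)]) (use assms(2,4) in auto)
  finally show ?thesis .
qed


lemma within_block:
  fixes G :: "int \<Rightarrow> real"
  assumes G0: "\<And>n. 0 \<le> G n" and Gsym: "\<And>n. G (-n) = G n"
    and l: "st j \<ge> 1" and i: "i \<in> blk st D j"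
    and good: "(\<Sum>m\<in>{1..<j}. G (int m * int (st j))) \<le> e"
  shows "(\<Sum>x\<in>blk st D j - {i}. G (i - x)) \<le> 2*e"
proof -
  let ?M = "Mseq st D j" and ?l = "st j"
  define h where "h k = ?M + int k * int ?l" for k
  obtain k where k: "i = h k" "1 \<le> k" "k \<le> j" using i unfolding blk_def h_def by auto
  have injh: "inj_on h UNIV" unfolding h_def using l by (auto intro!: inj_onI)
  have "blk st D j - {i} = h ` ({1..j} - {k})"
    unfolding blk_image h_def[symmetric] k(1) using inj_on_image_set_diff[OF injh] by auto
  hence "(\<Sum>x\<in>blk st D j - {i}. G (i - x)) = (\<Sum>k'\<in>{1..j} - {k}. G (h k - h k'))"
    using k(1) by (simp add: sum.reindex inj_on_subset[OF injh])
  also have "\<dots> = (\<Sum>k'\<in>{k'\<in>{1..j}. k' < k}. G (h k - h k')) + (\<Sum>k'\<in>{k'\<in>{1..j}. k < k'}. G (h k - h k'))"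
  proof -
    have e: "{1..j} - {k} = {k'\<in>{1..j}. k' < k} \<union> {k'\<in>{1..j}. k < k'}" by auto
    show ?thesis unfolding e by (rule sum.union_disjoint) auto
  qed
  also have "(\<Sum>k'\<in>{k'\<in>{1..j}. k' < k}. G (h k - h k')) \<le> (\<Sum>m\<in>{1..<j}. G (int m * int ?l))"
  proof -
    have "(\<Sum>k'\<in>{k'\<in>{1..j}. k' < k}. G (h k - h k')) = (\<Sum>k'\<in>{k'\<in>{1..j}. k' < k}. G (int ((\<lambda>k'. k - k') k') * int ?l))"
      by (rule sum.cong[OF refl]) (auto simp: h_def of_nat_diff algebra_simps)
    also have "\<dots> \<le> (\<Sum>m\<in>{1..<j}. G (int m * int ?l))"
      by (rule sum_inj_le) (use k G0 in \<open>auto intro!: inj_onI\<close>)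
    finally show ?thesis .
  qed
  also have "(\<Sum>k'\<in>{k'\<in>{1..j}. k < k'}. G (h k - h k')) \<le> (\<Sum>m\<in>{1..<j}. G (int m * int ?l))"
  proof -
    have "(\<Sum>k'\<in>{k'\<in>{1..j}. k < k'}. G (h k - h k')) = (\<Sum>k'\<in>{k'\<in>{1..j}. k < k'}. G (int ((\<lambda>k'. k' - k) k') * int ?l))"
    proof (rule sum.cong[OF refl])
      fix k' assume "k' \<in> {k'\<in>{1..j}. k < k'}"
      hence "h k - h k' = - (int (k' - k) * int ?l)" by (auto simp: h_def of_nat_diff algebra_simps)
      thus "G (h k - h k') = G (int ((\<lambda>k'. k' - k) k') * int ?l)" by (simp add: Gsym)
    qed
    also have "\<dots> \<le> (\<Sum>m\<in>{1..<j}. G (int m * int ?l))"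
      by (rule sum_inj_le) (use k G0 in \<open>auto intro!: inj_onI\<close>)
    finally show ?thesis .
  qed
  finally show ?thesis using good by simp
qed


lemma rows_bound:
  fixes G :: "int \<Rightarrow> real" and mm :: real
  assumes G0: "\<And>n. 0 \<le> G n" and Gsym: "\<And>n. G (-n) = G n" and mm: "mm > 0"
    and l: "\<And>j. st j \<ge> 1" and D: "\<And>j. D j \<ge> 1"
    and dec: "\<And>j n. j \<ge> 1 \<Longrightarrow> \<bar>n\<bar> \<ge> D j \<Longrightarrow> G n \<le> mm / (8 * real j ^ 2 * 2 ^ j)"
    and good: "\<And>j. (\<Sum>m\<in>{1..<j}. G (int m * int (st j))) \<le> mm/8"
    and F: "finite F" "F \<subseteq> (\<Union>j. blk st D j)" and i: "i \<in> F"
  shows "(\<Sum>x\<in>F - {i}. G (i - x)) \<le> mm/2"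
proof -
  define \<delta> where "\<delta> j = mm / (8 * real j ^ 2 * 2 ^ j)" for j
  obtain j0 where j0: "i \<in> blk st D j0" using F(2) i by auto
  have j01: "j0 \<ge> 1" by (rule blk_nonempty_pos[OF j0])
  define idx where "idx x = (SOME j. x \<in> blk st D j)" for x
  have idx: "x \<in> blk st D (idx x)" if "x \<in> F" for x
    unfolding idx_def using F(2) that by (auto intro: someI)
  define K where "K = Max (insert j0 (idx ` F))"
  have K0: "j0 \<le> K" unfolding K_def using F(1) by simp
  have FK: "F \<subseteq> (\<Union>j\<in>{..K}. blk st D j)"
  proof
    fix x assume x: "x \<in> F"
    have "idx x \<le> K" unfolding K_def using F(1) x by simp
    thus "x \<in> (\<Union>j\<in>{..K}. blk st D j)" using idx[OF x] by auto
  qed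
  define T where "T j = (\<Sum>x\<in>blk st D j - {i}. G (i - x))" for j
  have "(\<Sum>x\<in>F - {i}. G (i - x)) \<le> (\<Sum>x\<in>(\<Union>j\<in>{..K}. blk st D j - {i}). G (i - x))"
    by (rule sum_mono2) (use FK G0 in auto)
  also have "\<dots> \<le> (\<Sum>j\<in>{..K}. T j)"
    unfolding T_def by (rule sum_UN_le) (use G0 in auto)
  also have "\<dots> = T j0 + (\<Sum>j\<in>{..K} - {j0}. T j)"
    by (rule sum.remove) (use K0 in auto)
  also have "T j0 \<le> 2 * (mm/8)"
    unfolding T_def by (rule within_block[OF G0 Gsym l j0 good])
  also have "(\<Sum>j\<in>{..K} - {j0}. T j)
      \<le> (\<Sum>j\<in>{..K}. (if j < j0 then real j0 * \<delta> j0 else 0) + (if 0 < j then mm/8 * (1/2^j) else 0))"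
  proof -
    have "(\<Sum>j\<in>{..K} - {j0}. T j)
      \<le> (\<Sum>j\<in>{..K} - {j0}. (if j < j0 then real j0 * \<delta> j0 else 0) + (if 0 < j then mm/8 * (1/2^j) else 0))"
    proof (rule sum_mono)
      fix j assume j: "j \<in> {..K} - {j0}"
      have "T j \<le> (\<Sum>x\<in>blk st D j. G (i - x))"
        unfolding T_def by (rule sum_mono2) (use G0 in auto)
      also have "\<dots> \<le> (\<Sum>x\<in>blk st D j. (if j < j0 then \<delta> j0 else \<delta> j))"
      proof (rule sum_mono)
        fix x assume x: "x \<in> blk st D j"
        have j1: "j \<ge> 1" by (rule blk_nonempty_pos[OF x])
        show "G (i - x) \<le> (if j < j0 then \<delta> j0 else \<delta> j)"
        proof (cases "j < j0")
          case True
          have "i - x \<ge> D j0" by (rule blk_sep[OF D l True x j0])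
          hence "\<bar>i - x\<bar> \<ge> D j0" by simp
          thus ?thesis using True dec[OF j01] unfolding \<delta>_def by simp
        next
          case False
          hence "j0 < j" using j by auto
          have "x - i \<ge> D j" by (rule blk_sep[OF D l \<open>j0 < j\<close> j0 x])
          hence "\<bar>i - x\<bar> \<ge> D j" by simp
          thus ?thesis using False dec[OF j1] unfolding \<delta>_def by simp
        qed
      qed
      also have "\<dots> = real (card (blk st D j)) * (if j < j0 then \<delta> j0 else \<delta> j)" by simp
      also have "\<dots> \<le> real j * (if j < j0 then \<delta> j0 else \<delta> j)"
        by (rule mult_right_mono) (use card_blk mm in \<open>auto simp: \<delta>_def\<close>)
      also have "\<dots> \<le> (if j < j0 then real j0 * \<delta> j0 else 0) + (if 0 < j then mm/8 * (1/2^j) else 0)"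
      proof (cases "j < j0")
        case True
        hence a: "real j * \<delta> j0 \<le> real j0 * \<delta> j0"
          by (intro mult_right_mono) (use mm in \<open>auto simp: \<delta>_def\<close>)
        have nn: "0 \<le> (if 0 < j then mm/8 * (1/2^j) else 0)" using mm by simp
        show ?thesis unfolding if_P[OF True] using a nn by linarith
      next
        case False
        hence jp: "0 < j" using j j01 by auto
        have "real j * \<delta> j = mm/8 * (1/2^j) / real j"
          unfolding \<delta>_def using jp by (simp add: field_simps power2_eq_square)
        also have "\<dots> \<le> mm/8 * (1/2^j) / 1"
          by (rule divide_left_mono) (use jp mm in auto)
        finally show ?thesis using False jp by simp
      qed
      finally show "T j \<le> (if j < j0 then real j0 * \<delta> j0 else 0) + (if 0 < j then mm/8 * (1/2^j) else 0)" .
    qed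
    also have "\<dots> \<le> (\<Sum>j\<in>{..K}. (if j < j0 then real j0 * \<delta> j0 else 0) + (if 0 < j then mm/8 * (1/2^j) else 0))"
      by (rule sum_mono2) (use mm in \<open>auto simp: \<delta>_def\<close>)
    finally show ?thesis .
  qed
  also have "(\<Sum>j\<in>{..K}. (if j < j0 then real j0 * \<delta> j0 else 0) + (if 0 < j then mm/8 * (1/2^j) else 0))
      = real (card {j\<in>{..K}. j < j0}) * (real j0 * \<delta> j0) + mm/8 * (\<Sum>j\<in>{1..K}. 1/2^j)"
  proof -
    have e: "{x. x \<le> K \<and> 0 < x} = {Suc 0..K}" by auto
    show ?thesis
      by (simp add: sum.distrib sum.If_cases Int_def e sum_distrib_left)
  qed
  also have "real (card {j\<in>{..K}. j < j0}) * (real j0 * \<delta> j0) \<le> real j0 * (real j0 * \<delta> j0)"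
  proof (rule mult_right_mono)
    have "card {j\<in>{..K}. j < j0} \<le> card {..<j0}" by (rule card_mono) auto
    thus "real (card {j\<in>{..K}. j < j0}) \<le> real j0" by simp
  qed (use mm in \<open>simp add: \<delta>_def\<close>)
  also have "real j0 * (real j0 * \<delta> j0) = mm/8 * (1/2^j0)"
    unfolding \<delta>_def using j01 by (simp add: field_simps power2_eq_square)
  also have "mm/8 * (1/2^j0) \<le> mm/8"
    using mm by (simp add: field_simps)
  also have "mm/8 * (\<Sum>j\<in>{1..K}. 1/2^j) \<le> mm/8"
    using mult_left_mono[OF geom_half[of K], of "mm/8"] mm by simp
  finally show ?thesis by simp
qed


lemma construction:
  fixes G :: "int \<Rightarrow> real" and m0 Bb :: real
  assumes G0: "\<And>n. 0 \<le> G n" and Gsym: "\<And>n. G (-n) = G n"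
    and bes: "\<And>P. finite P \<Longrightarrow> (\<Sum>n\<in>P. (G n)\<^sup>2) \<le> Bb"
    and m0: "m0 > 0"
    and decay: "\<And>\<delta>. \<delta> > 0 \<Longrightarrow> \<exists>D::int. D \<ge> 1 \<and> (\<forall>n. \<bar>n\<bar> \<ge> D \<longrightarrow> G n \<le> \<delta>)"
  shows "\<exists>\<Lambda>::int set.
           (\<forall>\<alpha>::real. \<alpha> > 1 \<longrightarrow>
              (\<exists>C::real. C > 0 \<and>
                 (\<forall>N::nat. N \<ge> 1 \<longrightarrow>
                    (\<exists>(M::int) (l::nat). l \<ge> 1 \<and> real l < C * real N powr \<alpha> \<and>
                        {M + int k * int l | k. 1 \<le> k \<and> k \<le> N} \<subseteq> \<Lambda>)))) \<and>
           (\<forall>F i. finite F \<longrightarrow> F \<subseteq> \<Lambda> \<longrightarrow> i \<in> F \<longrightarrow> (\<Sum>x\<in>F - {i}. G (i - x)) \<le> m0/2)"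
proof -
  define good where "good N l \<longleftrightarrow> (\<Sum>m\<in>{1..<N}. G (int m * int l)) \<le> m0/8" for N l
  have eps: "m0/8 > 0" using m0 by simp
  have ex: "\<exists>l. l \<ge> 1 \<and> good N l" for N
  proof (cases "N \<ge> 1")
    case True
    obtain C where "C > 0" "\<forall>N\<ge>1. \<exists>l\<ge>1. (\<Sum>m\<in>{1..<N}. G (int m * int l)) \<le> m0/8 \<and> real l < C * real N powr 2"
      using good_steps[OF G0 bes eps, of 2] by auto
    thus ?thesis using True unfolding good_def by blast
  next
    case False
    hence "N = 0" by simp
    thus ?thesis unfolding good_def using m0 by (intro exI[of _ 1]) simp
  qed
  define st where "st N = (LEAST l. l \<ge> 1 \<and> good N l)" for N
  have st: "st N \<ge> 1 \<and> good N (st N)" for N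
    unfolding st_def by (rule LeastI_ex[OF ex])
  have st_le: "st N \<le> l" if "l \<ge> 1" "good N l" for N l
    unfolding st_def by (rule Least_le) (use that in auto)
  define \<delta> where "\<delta> j = m0 / (8 * real j ^ 2 * 2 ^ j)" for j :: nat
  define D where "D j = (if j = 0 then 1 else (SOME D::int. D \<ge> 1 \<and> (\<forall>n. \<bar>n\<bar> \<ge> D \<longrightarrow> G n \<le> \<delta> j)))" for j
  have Dp: "D j \<ge> 1 \<and> (j \<ge> 1 \<longrightarrow> (\<forall>n. \<bar>n\<bar> \<ge> D j \<longrightarrow> G n \<le> \<delta> j))" for j
  proof (cases "j = 0")
    case True thus ?thesis unfolding D_def by simp
  next
    case False
    hence "\<delta> j > 0" unfolding \<delta>_def using m0 by simp
    from someI_ex[OF decay[OF this]] show ?thesis unfolding D_def using False by simp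
  qed
  define \<Lambda> where "\<Lambda> = (\<Union>j. blk st D j)"
  have part1: "\<exists>C::real. C > 0 \<and>
                 (\<forall>N::nat. N \<ge> 1 \<longrightarrow>
                    (\<exists>(M::int) (l::nat). l \<ge> 1 \<and> real l < C * real N powr \<alpha> \<and>
                        {M + int k * int l | k. 1 \<le> k \<and> k \<le> N} \<subseteq> \<Lambda>))" if a: "\<alpha> > 1" for \<alpha>
  proof -
    obtain C where C: "C > 0" "\<forall>N\<ge>1. \<exists>l\<ge>1. (\<Sum>m\<in>{1..<N}. G (int m * int l)) \<le> m0/8 \<and> real l < C * real N powr \<alpha>"
      using good_steps[OF G0 bes eps a] by auto
    have "\<exists>(M::int) (l::nat). l \<ge> 1 \<and> real l < C * real N powr \<alpha> \<and>
              {M + int k * int l | k. 1 \<le> k \<and> k \<le> N} \<subseteq> \<Lambda>" if N: "N \<ge> 1" for N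
    proof -
      obtain l where l: "l \<ge> 1" "good N l" "real l < C * real N powr \<alpha>"
        using C(2) N unfolding good_def by blast
      have "st N \<le> l" by (rule st_le[OF l(1,2)])
      hence "real (st N) < C * real N powr \<alpha>" using l(3) by linarith
      moreover have "{Mseq st D N + int k * int (st N) | k. 1 \<le> k \<and> k \<le> N} \<subseteq> \<Lambda>"
        unfolding \<Lambda>_def blk_def by blast
      ultimately show ?thesis using st[of N] by blast
    qed
    thus ?thesis using C(1) by blast
  qed
  have part2: "(\<Sum>x\<in>F - {i}. G (i - x)) \<le> m0/2" if "finite F" "F \<subseteq> \<Lambda>" "i \<in> F" for F i
  proof (rule rows_bound[where G=G and mm=m0 and st=st and D=D])
    show "\<And>j. st j \<ge> 1" using st by blast
    show "\<And>j. D j \<ge> 1" using Dp by blast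
    show "\<And>j n. j \<ge> 1 \<Longrightarrow> \<bar>n\<bar> \<ge> D j \<Longrightarrow> G n \<le> m0 / (8 * real j ^ 2 * 2 ^ j)"
      using Dp unfolding \<delta>_def by blast
    show "\<And>j. (\<Sum>m\<in>{1..<j}. G (int m * int (st j))) \<le> m0/8"
      using st unfolding good_def by blast
  qed (use that G0 Gsym m0 in \<open>auto simp: \<Lambda>_def\<close>)
  show ?thesis
    by (rule exI[of _ \<Lambda>]) (use part1 part2 in blast)
qed


theorem theorem3:
  fixes S :: "real set"
  assumes "S \<subseteq> {-pi..<pi}"
    and "S \<in> sets lebesgue"
    and "emeasure lebesgue S > 0"
  shows "\<exists>\<Lambda> :: int set.
           (\<forall>\<alpha>::real. \<alpha> > 1 \<longrightarrow>
              (\<exists>C::real. C > 0 \<and>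
                 (\<forall>N::nat. N \<ge> 1 \<longrightarrow>
                    (\<exists>(M::int) (l::nat). l \<ge> 1 \<and> real l < C * real N powr \<alpha> \<and>
                        {M + int k * int l | k. 1 \<le> k \<and> k \<le> N} \<subseteq> \<Lambda>)))) \<and>
           riesz_sequence_L2 S \<Lambda> exps"
proof -
  have S: "S \<in> sets lebesgue" "S \<subseteq> {-pi..pi}" using assms by auto
  have fin: "emeasure lebesgue S < \<infinity>"
    using emeasure_mono[OF S(2), of lebesgue] Tper_fin by (simp add: le_less_trans)
  have m0: "measure lebesgue S > 0"
    using assms(3) fin by (simp add: measure_def enn2real_positive_iff)
  define G where "G n = cmod (gA S n)" for n
  have G0: "\<And>n. 0 \<le> G n" unfolding G_def by simp
  have Gsym: "\<And>n. G (-n) = G n" unfolding G_def by (rule cmod_gA_neg)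
  have bes: "\<And>P. finite P \<Longrightarrow> (\<Sum>n\<in>P. (G n)\<^sup>2) \<le> 2*pi * measure lebesgue S"
    unfolding G_def by (rule bessel[OF S])
  have decay: "\<And>\<delta>. \<delta> > 0 \<Longrightarrow> \<exists>D::int. D \<ge> 1 \<and> (\<forall>n. \<bar>n\<bar> \<ge> D \<longrightarrow> G n \<le> \<delta>)"
    unfolding G_def by (rule coeff_decay[OF S])
  obtain \<Lambda> :: "int set" where L1: "\<forall>\<alpha>::real. \<alpha> > 1 \<longrightarrow>
              (\<exists>C::real. C > 0 \<and>
                 (\<forall>N::nat. N \<ge> 1 \<longrightarrow>
                    (\<exists>(M::int) (l::nat). l \<ge> 1 \<and> real l < C * real N powr \<alpha> \<and>
                        {M + int k * int l | k. 1 \<le> k \<and> k \<le> N} \<subseteq> \<Lambda>)))"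
    and L2: "\<forall>F i. finite F \<longrightarrow> F \<subseteq> \<Lambda> \<longrightarrow> i \<in> F \<longrightarrow> (\<Sum>x\<in>F - {i}. G (i - x)) \<le> measure lebesgue S / 2"
    using construction[OF G0 Gsym bes m0 decay] by blast
  have "riesz_sequence_L2 S \<Lambda> exps"
  proof (rule riesz_from_rows[OF S, of "measure lebesgue S / 2"])
    show "measure lebesgue S / 2 < measure lebesgue S" using m0 by simp
    show "0 \<le> measure lebesgue S / 2" using m0 by simp
    fix F i assume "finite F" "F \<subseteq> \<Lambda>" "i \<in> F"
    thus "(\<Sum>j\<in>F - {i}. cmod (gA S (i - j))) \<le> measure lebesgue S / 2"
      using L2 unfolding G_def by blast
  qed
  thus ?thesis using L1 by blast
qed

end
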